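(* With the notation below, the exact sequence of $G$-spaces $$0\to\ell_2(T)\to\ell_2(T)\oplus\ell_2(T)\to\ell_2(T)\to0,$$ where $G=\mathrm{Aut}(T)$ acts on both end spaces by $u$ and on the middle space by $\lambda(g)=\begin{pmatrix}u(g)&u(g)L-Lu(g)\\0&u(g)\end{pmatrix}$, does not $G$-split (there is no bounded linear $G$-equivariant right inverse of the quotient map, equivalently no bounded $G$-equivariant projection onto the first summand), although it splits as an exact sequence of Banach spaces.
   Context: $F_\infty$ is the free group on generators $a_1,a_2,\dots$; $T$ is its Cayley graph (a tree, vertices the reduced words, rooted at the empty word $\emptyset$); for $t\ne\emptyset$, $\hat t$ is $t$ with its last letter deleted. $G=\mathrm{Aut}(T)$ is the group of graph automorphisms of $T$, acting by $u(g)x=(x(g^{-1}t))_{t\in T}$ on $\mathbb C^T$, $\ell_1(T)$, $\ell_2(T)$. $L:\ell_1(T)\to\ell_1(T)$ is given by $Le_t=e_{\hat t}$ ($t\ne\emptyset$), $Le_\emptyset=0$. It is known (Pytlik–Szwarc) that $u(g)L-Lu(g)$ extends to a bounded operator on $\ell_2(T)$ of norm at most $2$, so $\lambda$ is a bounded representation on $\ell_2(T)\oplus\ell_2(T)$. *)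

theory Defs
  imports "HOL-Analysis.Analysis"
begin

text \<open>A letter is a generator index together with a sign: (i, True) is a_i,
  (i, False) is a_i inverse.  Generators are indexed by nat (a countably
  infinite family, as a_1, a_2, ...).\<close>
type_synonym letter = "nat \<times> bool"

definition inv_letter :: "letter \<Rightarrow> letter" where
  "inv_letter l = (fst l, \<not> snd l)"

definition reduced :: "letter list \<Rightarrow> bool" where
  "reduced w \<longleftrightarrow> (\<forall>i. Suc i < length w \<longrightarrow> w ! Suc i \<noteq> inv_letter (w ! i))"

typedef vertex = "{w :: letter list. reduced w}"
  morphisms word Abs_vertex
  by (rule exI[of _ "[]"]) (simp add: reduced_def)

definition root :: vertex where
  "root = Abs_vertex []"

definition parent :: "vertex \<Rightarrow> vertex" where
  "parent t = Abs_vertex (butlast (word t))"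

text \<open>Edges of the Cayley graph (right multiplication by generators):
  t is adjacent to t-hat.\<close>
definition adj :: "vertex \<Rightarrow> vertex \<Rightarrow> bool" where
  "adj s t \<longleftrightarrow> (t \<noteq> root \<and> s = parent t) \<or> (s \<noteq> root \<and> t = parent s)"

definition Aut :: "(vertex \<Rightarrow> vertex) set" where
  "Aut = {g. bij g \<and> (\<forall>s t. adj s t \<longleftrightarrow> adj (g s) (g t))}"

definition u :: "(vertex \<Rightarrow> vertex) \<Rightarrow> (vertex \<Rightarrow> complex) \<Rightarrow> (vertex \<Rightarrow> complex)" where
  "u g x = (\<lambda>t. x (inv g t))"

definition ell1 :: "(vertex \<Rightarrow> complex) set" where
  "ell1 = {x. (\<lambda>t. cmod (x t)) summable_on UNIV}"

definition ell2 :: "(vertex \<Rightarrow> complex) set" where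
  "ell2 = {x. (\<lambda>t. (cmod (x t))\<^sup>2) summable_on UNIV}"

definition l2norm :: "(vertex \<Rightarrow> complex) \<Rightarrow> real" where
  "l2norm x = sqrt (\<Sum>\<^sub>\<infinity>t. (cmod (x t))\<^sup>2)"

text \<open>L e_t = e_{t-hat} (t not the root), L e_root = 0, extended to ell_1:
  (L x)(s) = sum of x(t) over all t \<noteq> root with t-hat = s.\<close>
definition L :: "(vertex \<Rightarrow> complex) \<Rightarrow> (vertex \<Rightarrow> complex)" where
  "L x = (\<lambda>s. \<Sum>\<^sub>\<infinity>t\<in>{t. t \<noteq> root \<and> parent t = s}. x t)"

text \<open>Bounded linear operators on ell_2 (functions defined on all of
  vertex => complex, only their behaviour on ell_2 matters).\<close>
definition bounded_op_l2 :: "((vertex \<Rightarrow> complex) \<Rightarrow> (vertex \<Rightarrow> complex)) \<Rightarrow> bool" where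
  "bounded_op_l2 A \<longleftrightarrow>
     (\<forall>x\<in>ell2. A x \<in> ell2) \<and>
     (\<forall>x\<in>ell2. \<forall>y\<in>ell2. A (\<lambda>t. x t + y t) = (\<lambda>t. A x t + A y t)) \<and>
     (\<forall>x\<in>ell2. \<forall>c::complex. A (\<lambda>t. c * x t) = (\<lambda>t. c * A x t)) \<and>
     (\<exists>K. \<forall>x\<in>ell2. l2norm (A x) \<le> K * l2norm x)"

text \<open>D g: the bounded extension to ell_2 of u(g)L - L u(g) (defined on ell_1),
  normalised to be 0 outside ell_2 so that it is unique (ell_1 is dense in ell_2).\<close>
definition D :: "(vertex \<Rightarrow> vertex) \<Rightarrow> (vertex \<Rightarrow> complex) \<Rightarrow> (vertex \<Rightarrow> complex)" where
  "D g = (THE A. bounded_op_l2 A \<and> (\<forall>x. x \<notin> ell2 \<longrightarrow> A x = (\<lambda>t. 0)) \<and>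
                 (\<forall>x\<in>ell1. A x = (\<lambda>s. u g (L x) s - L (u g x) s)))"

type_synonym pair = "(vertex \<Rightarrow> complex) \<times> (vertex \<Rightarrow> complex)"

definition l2pair :: "pair set" where
  "l2pair = ell2 \<times> ell2"

definition pairnorm :: "pair \<Rightarrow> real" where
  "pairnorm p = sqrt ((l2norm (fst p))\<^sup>2 + (l2norm (snd p))\<^sup>2)"

definition lam :: "(vertex \<Rightarrow> vertex) \<Rightarrow> pair \<Rightarrow> pair" where
  "lam g p = ((\<lambda>t. u g (fst p) t + D g (snd p) t), u g (snd p))"

definition bounded_op_into_pair :: "((vertex \<Rightarrow> complex) \<Rightarrow> pair) \<Rightarrow> bool" where
  "bounded_op_into_pair S \<longleftrightarrow>
     (\<forall>y\<in>ell2. S y \<in> l2pair) \<and>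
     (\<forall>x\<in>ell2. \<forall>y\<in>ell2. S (\<lambda>t. x t + y t) =
          ((\<lambda>t. fst (S x) t + fst (S y) t), (\<lambda>t. snd (S x) t + snd (S y) t))) \<and>
     (\<forall>x\<in>ell2. \<forall>c::complex. S (\<lambda>t. c * x t) =
          ((\<lambda>t. c * fst (S x) t), (\<lambda>t. c * snd (S x) t))) \<and>
     (\<exists>K. \<forall>y\<in>ell2. pairnorm (S y) \<le> K * l2norm y)"

definition right_inverse_of_quotient :: "((vertex \<Rightarrow> complex) \<Rightarrow> pair) \<Rightarrow> bool" where
  "right_inverse_of_quotient S \<longleftrightarrow> (\<forall>y\<in>ell2. snd (S y) = y)"

end

theory Submission imports Defs begin
lemma inv_inv[simp]: "inv_letter (inv_letter l) = l"
  by (simp add: inv_letter_def)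
lemma inv_neq[simp]: "inv_letter l \<noteq> l" "l \<noteq> inv_letter l"
  by (auto simp: inv_letter_def prod_eq_iff)

lemma reduced_Nil[simp]: "reduced []" by (simp add: reduced_def)
lemma reduced_Cons: "reduced (m # w) \<longleftrightarrow> reduced w \<and> (w \<noteq> [] \<longrightarrow> hd w \<noteq> inv_letter m)"
proof
  assume r: "reduced (m # w)"
  have "reduced w" unfolding reduced_def
  proof (intro allI impI)
    fix i assume "Suc i < length w"
    with r show "w ! Suc i \<noteq> inv_letter (w ! i)" unfolding reduced_def
      by (metis length_Cons nth_Cons_Suc Suc_less_eq)
  qed
  moreover have "w \<noteq> [] \<longrightarrow> hd w \<noteq> inv_letter m"
    using r unfolding reduced_def by (metis hd_conv_nth length_Cons length_greater_0_conv nth_Cons_0 nth_Cons_Suc Suc_less_eq)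
  ultimately show "reduced w \<and> (w \<noteq> [] \<longrightarrow> hd w \<noteq> inv_letter m)" by blast
next
  assume h: "reduced w \<and> (w \<noteq> [] \<longrightarrow> hd w \<noteq> inv_letter m)"
  show "reduced (m # w)" unfolding reduced_def
  proof (intro allI impI)
    fix i assume i: "Suc i < length (m # w)"
    show "(m # w) ! Suc i \<noteq> inv_letter ((m # w) ! i)"
    proof (cases i)
      case 0 with i h show ?thesis by (auto simp: hd_conv_nth)
    next
      case (Suc j) with i h show ?thesis unfolding reduced_def by auto
    qed
  qed
qed

lemma reduced_single[simp]: "reduced [m]" by (simp add: reduced_Cons)
lemma reduced_two[simp]: "reduced [m, m'] \<longleftrightarrow> m' \<noteq> inv_letter m" by (simp add: reduced_Cons)

lemma reduced_snoc: "reduced (w @ [m]) \<longleftrightarrow> reduced w \<and> (w \<noteq> [] \<longrightarrow> m \<noteq> inv_letter (last w))"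
proof (induction w)
  case Nil then show ?case by simp
next
  case (Cons a w)
  show ?case
  proof (cases w)
    case Nil then show ?thesis by (auto simp: reduced_Cons)
  next
    case (Cons b w') then show ?thesis using Cons.IH by (auto simp: reduced_Cons)
  qed
qed

lemma reduced_butlast: "reduced w \<Longrightarrow> reduced (butlast w)"
  by (metis append_butlast_last_id butlast.simps(1) reduced_snoc)

definition lmw :: "letter \<Rightarrow> letter list \<Rightarrow> letter list" where
  "lmw l w = (case w of [] \<Rightarrow> [l] | m # w' \<Rightarrow> if m = inv_letter l then w' else l # w)"

lemma lmw_Nil[simp]: "lmw l [] = [l]" by (simp add: lmw_def)
lemma lmw_Cons[simp]: "lmw l (m # w') = (if m = inv_letter l then w' else l # m # w')" by (simp add: lmw_def)

lemma lmw_reduced: "reduced w \<Longrightarrow> reduced (lmw l w)"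
  by (cases w) (auto simp: reduced_Cons)

lemma lmw_inv: "reduced w \<Longrightarrow> lmw (inv_letter l) (lmw l w) = w"
proof (cases w)
  case (Cons m w')
  assume r: "reduced w"
  show ?thesis
  proof (cases "m = inv_letter l")
    case True
    then show ?thesis using r Cons by (cases w') (auto simp: reduced_Cons)
  qed (use Cons in auto)
qed auto

lemma lmw_snoc: "w \<noteq> [] \<Longrightarrow> lmw l (w @ [m]) = lmw l w @ [m]"
  by (cases w) auto

definition lmv :: "letter \<Rightarrow> vertex \<Rightarrow> vertex" where
  "lmv l v = Abs_vertex (lmw l (word v))"
definition av :: "letter \<Rightarrow> vertex" where "av l = Abs_vertex [l]"
definition C :: "vertex \<Rightarrow> vertex set" where "C s = {t. t \<noteq> root \<and> parent t = s}"

lemma reduced_word[simp]: "reduced (word v)" using word by auto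
lemma word_root[simp]: "word root = []"
  by (simp add: root_def Abs_vertex_inverse)
lemma word_av[simp]: "word (av l) = [l]"
  by (simp add: av_def Abs_vertex_inverse)
lemma word_lmv[simp]: "word (lmv l v) = lmw l (word v)"
  by (simp add: lmv_def Abs_vertex_inverse lmw_reduced)
lemma word_parent[simp]: "word (parent t) = butlast (word t)"
  by (simp add: parent_def Abs_vertex_inverse reduced_butlast)
lemma vertex_eq: "s = t \<longleftrightarrow> word s = word t" by (simp add: word_inject)
lemma lmv_inv[simp]: "lmv (inv_letter l) (lmv l v) = v"
  by (simp add: vertex_eq lmw_inv)

lemma mem_C: "t \<in> C s \<longleftrightarrow> (\<exists>m. word t = word s @ [m])"
proof
  assume "t \<in> C s"
  then have "word t \<noteq> []" "butlast (word t) = word s" by (auto simp: C_def vertex_eq)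
  then show "\<exists>m. word t = word s @ [m]" by (metis append_butlast_last_id)
next
  assume "\<exists>m. word t = word s @ [m]"
  then show "t \<in> C s" by (auto simp: C_def vertex_eq)
qed

lemma adj_word: "adj s t \<longleftrightarrow> (\<exists>m. word t = word s @ [m]) \<or> (\<exists>m. word s = word t @ [m])"
proof -
  have "adj s t \<longleftrightarrow> t \<in> C s \<or> s \<in> C t" by (auto simp: adj_def C_def)
  then show ?thesis by (simp only: mem_C)
qed

lemma adj_lmv: "adj s t \<Longrightarrow> adj (lmv l s) (lmv l t)"
proof -
  have key: "(\<exists>m'. lmw l (word s @ [m]) = lmw l (word s) @ [m']) \<or>
             (\<exists>m'. lmw l (word s) = lmw l (word s @ [m]) @ [m'])" for s m
  proof (cases "word s")
    case Nil then show ?thesis by (cases "m = inv_letter l") auto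
  next
    case (Cons a w) then show ?thesis by (auto simp: lmw_snoc)
  qed
  assume "adj s t"
  then show ?thesis unfolding adj_word
    by (metis key word_lmv)
qed

lemma bij_lmv: "bij (lmv l)"
  by (rule o_bij[where g = "lmv (inv_letter l)"]) (auto simp: fun_eq_iff, metis inv_inv lmv_inv)

lemma lmv_Aut: "lmv l \<in> Aut"
proof -
  have "adj s t \<longleftrightarrow> adj (lmv l s) (lmv l t)" for s t
  proof
    assume "adj (lmv l s) (lmv l t)"
    then have "adj (lmv (inv_letter l) (lmv l s)) (lmv (inv_letter l) (lmv l t))" by (rule adj_lmv)
    then show "adj s t" by simp
  qed (rule adj_lmv)
  then show ?thesis unfolding Aut_def using bij_lmv by blast
qed

lemma inv_lmv: "inv (lmv l) = lmv (inv_letter l)"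
  by (rule inv_unique_comp) (auto simp: fun_eq_iff, metis inv_inv lmv_inv)

lemma C_map: "s \<noteq> root \<Longrightarrow> t \<in> C s \<Longrightarrow> lmv k t \<in> C (lmv k s)"
  unfolding mem_C by (auto simp: vertex_eq lmw_snoc)

lemma root_notin_C[simp]: "root \<notin> C s" by (simp add: C_def)

lemma image_C_other:
  assumes "s \<noteq> root" "s \<noteq> av l"
  shows "lmv (inv_letter l) ` C s = C (lmv (inv_letter l) s)"
proof
  show "lmv (inv_letter l) ` C s \<subseteq> C (lmv (inv_letter l) s)" using C_map[OF assms(1)] by blast
  show "C (lmv (inv_letter l) s) \<subseteq> lmv (inv_letter l) ` C s"
  proof
    fix t assume t: "t \<in> C (lmv (inv_letter l) s)"
    have ne: "lmv (inv_letter l) s \<noteq> root"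
    proof
      assume "lmv (inv_letter l) s = root"
      then have "lmv l (lmv (inv_letter l) s) = lmv l root" by simp
      then have "s = lmv l root" by (metis inv_inv lmv_inv)
      then show False using assms(2) by (simp add: vertex_eq)
    qed
    have "lmv l t \<in> C (lmv l (lmv (inv_letter l) s))" by (rule C_map[OF ne t])
    then have "lmv l t \<in> C s" by (metis inv_inv lmv_inv)
    moreover have "t = lmv (inv_letter l) (lmv l t)" by simp
    ultimately show "t \<in> lmv (inv_letter l) ` C s" by blast
  qed
qed

lemma image_C_root:
  "lmv (inv_letter l) ` C root = insert root (C (av (inv_letter l)))"
proof
  show "lmv (inv_letter l) ` C root \<subseteq> insert root (C (av (inv_letter l)))"
  proof
    fix t' assume "t' \<in> lmv (inv_letter l) ` C root"
    then obtain t m where "t' = lmv (inv_letter l) t" "word t = [m]" by (auto simp: mem_C)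
    then show "t' \<in> insert root (C (av (inv_letter l)))"
      by (cases "m = l") (auto simp: vertex_eq mem_C)
  qed
  show "insert root (C (av (inv_letter l))) \<subseteq> lmv (inv_letter l) ` C root"
  proof
    fix t' assume t': "t' \<in> insert root (C (av (inv_letter l)))"
    show "t' \<in> lmv (inv_letter l) ` C root"
    proof (cases "t' = root")
      case True
      have "av l \<in> C root" by (simp add: mem_C)
      moreover have "root = lmv (inv_letter l) (av l)" by (simp add: vertex_eq)
      ultimately show ?thesis using True by blast
    next
      case False
      then obtain m where m: "word t' = [inv_letter l, m]" using t' by (auto simp: mem_C)
      then have "m \<noteq> l" using reduced_word[of t'] by auto
      have "Abs_vertex [m] \<in> C root" by (simp add: mem_C Abs_vertex_inverse)
      moreover have "t' = lmv (inv_letter l) (Abs_vertex [m])"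
        using m \<open>m \<noteq> l\<close> by (simp add: vertex_eq Abs_vertex_inverse)
      ultimately show ?thesis by blast
    qed
  qed
qed

lemma image_C_av:
  "lmv (inv_letter l) ` C (av l) = C root - {av (inv_letter l)}"
proof
  show "lmv (inv_letter l) ` C (av l) \<subseteq> C root - {av (inv_letter l)}"
  proof
    fix t' assume "t' \<in> lmv (inv_letter l) ` C (av l)"
    then obtain t m where tm: "t' = lmv (inv_letter l) t" "word t = [l, m]" by (auto simp: mem_C)
    then have "m \<noteq> inv_letter l" using reduced_word[of t] by auto
    then show "t' \<in> C root - {av (inv_letter l)}" using tm by (auto simp: vertex_eq mem_C)
  qed
  show "C root - {av (inv_letter l)} \<subseteq> lmv (inv_letter l) ` C (av l)"
  proof
    fix t' assume t': "t' \<in> C root - {av (inv_letter l)}"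
    then obtain m where m: "word t' = [m]" "m \<noteq> inv_letter l" by (auto simp: mem_C vertex_eq)
    have "Abs_vertex [l, m] \<in> C (av l)" using m by (simp add: mem_C Abs_vertex_inverse)
    moreover have "t' = lmv (inv_letter l) (Abs_vertex [l, m])"
      using m by (simp add: vertex_eq Abs_vertex_inverse)
    ultimately show "t' \<in> lmv (inv_letter l) ` C (av l)" by blast
  qed
qed

definition e :: "vertex \<Rightarrow> vertex \<Rightarrow> complex" where "e v = (\<lambda>t. if t = v then 1 else 0)"

lemma l2norm_nonneg: "l2norm x \<ge> 0"
  unfolding l2norm_def by (simp add: infsum_nonneg)

lemma l2norm_sq: "(l2norm x)\<^sup>2 = (\<Sum>\<^sub>\<infinity>t. (cmod (x t))\<^sup>2)"
  unfolding l2norm_def by (simp add: infsum_nonneg)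

lemma fin_supp_ell:
  assumes "finite F" "\<And>t. t \<notin> F \<Longrightarrow> x t = 0"
  shows "x \<in> ell1" "x \<in> ell2"
proof -
  have "(\<lambda>t. cmod (x t)) summable_on UNIV"
    by (rule finite_nonzero_values_imp_summable_on, rule finite_subset[OF _ assms(1)]) (use assms in auto)
  then show "x \<in> ell1" by (simp add: ell1_def)
  have "(\<lambda>t. (cmod (x t))\<^sup>2) summable_on UNIV"
    by (rule finite_nonzero_values_imp_summable_on, rule finite_subset[OF _ assms(1)]) (use assms in auto)
  then show "x \<in> ell2" by (simp add: ell2_def)
qed

lemma l2norm_fin:
  assumes "finite F" "\<And>t. t \<notin> F \<Longrightarrow> x t = 0"
  shows "l2norm x = sqrt (\<Sum>t\<in>F. (cmod (x t))\<^sup>2)"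
proof -
  have "(\<Sum>\<^sub>\<infinity>t. (cmod (x t))\<^sup>2) = (\<Sum>\<^sub>\<infinity>t\<in>F. (cmod (x t))\<^sup>2)"
    by (rule infsum_cong_neutral) (use assms in auto)
  then show ?thesis using assms(1) by (simp add: l2norm_def)
qed

lemma ell2_sum_le:
  assumes "x \<in> ell2" "finite F"
  shows "(\<Sum>t\<in>F. (cmod (x t))\<^sup>2) \<le> (l2norm x)\<^sup>2"
  unfolding l2norm_sq
  by (rule finite_sum_le_infsum) (use assms in \<open>auto simp: ell2_def\<close>)

lemma ell2_point_le:
  assumes "x \<in> ell2"
  shows "cmod (x s) \<le> l2norm x"
proof -
  have "(cmod (x s))\<^sup>2 \<le> (l2norm x)\<^sup>2" using ell2_sum_le[OF assms, of "{s}"] by simp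
  then show ?thesis using l2norm_nonneg[of x] by (simp add: power_mono_iff)
qed

lemma ell2_dom:
  assumes "x \<in> ell2" "\<And>t. cmod (y t) \<le> cmod (x t)"
  shows "y \<in> ell2" "l2norm y \<le> l2norm x"
proof -
  have s: "(\<lambda>t. (cmod (x t))\<^sup>2) summable_on UNIV" using assms(1) by (simp add: ell2_def)
  have le: "(cmod (y t))\<^sup>2 \<le> (cmod (x t))\<^sup>2" for t using assms(2)[of t] by (simp add: power_mono)
  have sy: "(\<lambda>t. (cmod (y t))\<^sup>2) summable_on UNIV"
    by (rule summable_on_comparison_test[OF s]) (use le in auto)
  then show "y \<in> ell2" by (simp add: ell2_def)
  have "(\<Sum>\<^sub>\<infinity>t. (cmod (y t))\<^sup>2) \<le> (\<Sum>\<^sub>\<infinity>t. (cmod (x t))\<^sup>2)"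
    by (rule infsum_mono[OF sy s]) (use le in auto)
  then show "l2norm y \<le> l2norm x" unfolding l2norm_def by simp
qed

lemma ell2_add:
  assumes "x \<in> ell2" "y \<in> ell2"
  shows "(\<lambda>t. x t + y t) \<in> ell2"
proof -
  have s: "(\<lambda>t. 2 * (cmod (x t))\<^sup>2 + 2 * (cmod (y t))\<^sup>2) summable_on UNIV"
    using assms by (auto simp: ell2_def intro!: summable_on_add summable_on_cmult_right)
  have le: "(cmod (x t + y t))\<^sup>2 \<le> 2 * (cmod (x t))\<^sup>2 + 2 * (cmod (y t))\<^sup>2" for t
  proof -
    have "cmod (x t + y t) \<le> cmod (x t) + cmod (y t)" by (rule norm_triangle_ineq)
    then have "(cmod (x t + y t))\<^sup>2 \<le> (cmod (x t) + cmod (y t))\<^sup>2" by (simp add: power_mono)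
    also have "\<dots> \<le> 2 * (cmod (x t))\<^sup>2 + 2 * (cmod (y t))\<^sup>2"
      by (smt (verit) sum_squares_bound power2_sum)
    finally show ?thesis .
  qed
  have "(\<lambda>t. (cmod (x t + y t))\<^sup>2) summable_on UNIV"
    by (rule summable_on_comparison_test[OF s]) (use le in auto)
  then show ?thesis by (simp add: ell2_def)
qed

lemma ell2_scale:
  assumes "x \<in> ell2"
  shows "(\<lambda>t. c * x t) \<in> ell2"
proof -
  have "(\<lambda>t. (cmod c)\<^sup>2 * (cmod (x t))\<^sup>2) summable_on UNIV"
    using assms by (auto simp: ell2_def intro!: summable_on_cmult_right)
  then show ?thesis by (simp add: ell2_def norm_mult power_mult_distrib)
qed

lemma ell1_summable:
  assumes "x \<in> ell1"
  shows "x summable_on A"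
proof -
  have "(\<lambda>t. norm (x t)) summable_on UNIV" using assms by (simp add: ell1_def)
  then have "x summable_on UNIV" by (rule Infinite_Sum.abs_summable_summable)
  then show ?thesis by (rule summable_on_subset_banach) auto
qed

lemma ell1_ell2:
  assumes "x \<in> ell1"
  shows "x \<in> ell2"
proof -
  have s: "(\<lambda>t. cmod (x t)) summable_on UNIV" using assms by (simp add: ell1_def)
  define M where "M = (\<Sum>\<^sub>\<infinity>t. cmod (x t))"
  have pt: "cmod (x t) \<le> M" for t
    using finite_sum_le_infsum[OF s, of "{t}"] by (simp add: M_def)
  have s2: "(\<lambda>t. M * cmod (x t)) summable_on UNIV" using s by (rule summable_on_cmult_right)
  have "(\<lambda>t. (cmod (x t))\<^sup>2) summable_on UNIV"
    by (rule summable_on_comparison_test[OF s2]) (auto simp: power2_eq_square intro: mult_right_mono pt)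
  then show ?thesis by (simp add: ell2_def)
qed

lemma op_unique:
  assumes b1: "bounded_op_l2 A1" and b2: "bounded_op_l2 A2"
    and z1: "\<And>x. x \<notin> ell2 \<Longrightarrow> A1 x = (\<lambda>t. 0)" and z2: "\<And>x. x \<notin> ell2 \<Longrightarrow> A2 x = (\<lambda>t. 0)"
    and eq: "\<And>x. x \<in> ell1 \<Longrightarrow> A1 x = A2 x"
  shows "A1 = A2"
proof
  fix x
  show "A1 x = A2 x"
  proof (cases "x \<in> ell2")
    case False then show ?thesis using z1 z2 by simp
  next
    case xin: True
    obtain K1 where K1: "\<And>y. y \<in> ell2 \<Longrightarrow> l2norm (A1 y) \<le> K1 * l2norm y"
      using b1 unfolding bounded_op_l2_def by blast
    obtain K2 where K2: "\<And>y. y \<in> ell2 \<Longrightarrow> l2norm (A2 y) \<le> K2 * l2norm y"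
      using b2 unfolding bounded_op_l2_def by blast
    have add1: "\<And>y z. y \<in> ell2 \<Longrightarrow> z \<in> ell2 \<Longrightarrow> A1 (\<lambda>t. y t + z t) = (\<lambda>t. A1 y t + A1 z t)"
      using b1 unfolding bounded_op_l2_def by blast
    have add2: "\<And>y z. y \<in> ell2 \<Longrightarrow> z \<in> ell2 \<Longrightarrow> A2 (\<lambda>t. y t + z t) = (\<lambda>t. A2 y t + A2 z t)"
      using b2 unfolding bounded_op_l2_def by blast
    have in1: "\<And>y. y \<in> ell2 \<Longrightarrow> A1 y \<in> ell2" using b1 unfolding bounded_op_l2_def by blast
    have in2: "\<And>y. y \<in> ell2 \<Longrightarrow> A2 y \<in> ell2" using b2 unfolding bounded_op_l2_def by blast
    define K where "K = \<bar>K1\<bar> + \<bar>K2\<bar>"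
    show ?thesis
    proof
      fix s
      have "cmod (A1 x s - A2 x s) \<le> \<epsilon>" if ep: "\<epsilon> > 0" for \<epsilon>
      proof -
        define \<delta> where "\<delta> = (\<epsilon> / (K + 1))\<^sup>2"
        have Kn: "K \<ge> 0" by (simp add: K_def)
        have dpos: "\<delta> > 0" using ep Kn by (simp add: \<delta>_def)
        define f where "f = (\<lambda>t. (cmod (x t))\<^sup>2)"
        have fs: "f summable_on UNIV" using xin by (simp add: ell2_def f_def)
        obtain F where F: "finite F" "dist (sum f F) (infsum f UNIV) \<le> \<delta>"
          using infsum_finite_approximation[OF fs dpos] by blast
        define xF where "xF = (\<lambda>t. if t \<in> F then x t else 0)"
        define xR where "xR = (\<lambda>t. if t \<in> F then 0 else x t)"
        have xFi: "xF \<in> ell1" "xF \<in> ell2" using fin_supp_ell[OF F(1), of xF] by (auto simp: xF_def)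
        have xRi: "xR \<in> ell2" by (rule ell2_dom(1)[OF xin]) (simp add: xR_def)
        have xs: "x = (\<lambda>t. xF t + xR t)" by (auto simp: xF_def xR_def)
        define fF where "fF = (\<lambda>t. if t \<in> F then f t else 0)"
        define fR where "fR = (\<lambda>t. if t \<in> F then 0 else f t)"
        have fFs: "fF summable_on UNIV"
          by (rule finite_nonzero_values_imp_summable_on, rule finite_subset[OF _ F(1)]) (auto simp: fF_def)
        have fFi: "infsum fF UNIV = sum f F"
        proof -
          have "infsum fF UNIV = infsum f F" by (rule infsum_cong_neutral) (auto simp: fF_def)
          then show ?thesis using F(1) by simp
        qed
        have fRs: "fR summable_on UNIV"
          by (rule summable_on_comparison_test[OF fs]) (auto simp: fR_def f_def)
        have "infsum f UNIV = infsum (\<lambda>t. fF t + fR t) UNIV"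
          by (rule infsum_cong) (auto simp: fF_def fR_def)
        also have "\<dots> = sum f F + infsum fR UNIV" using infsum_add[OF fFs fRs] fFi by simp
        finally have feq: "infsum f UNIV = sum f F + infsum fR UNIV" .
        have "infsum fR UNIV \<le> \<delta>" using F(2) unfolding dist_real_def feq by linarith
        moreover have "(l2norm xR)\<^sup>2 = infsum fR UNIV"
          unfolding l2norm_sq by (rule infsum_cong) (auto simp: fR_def xR_def f_def)
        ultimately have "(l2norm xR)\<^sup>2 \<le> (\<epsilon> / (K + 1))\<^sup>2" by (simp add: \<delta>_def)
        then have nR: "l2norm xR \<le> \<epsilon> / (K + 1)"
          by (rule power2_le_imp_le) (use ep Kn in auto)
        have e1: "A1 x s = A1 xF s + A1 xR s" by (subst xs) (simp add: add1[OF xFi(2) xRi])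
        have e2: "A2 x s = A2 xF s + A2 xR s" by (subst xs) (simp add: add2[OF xFi(2) xRi])
        have "A1 x s - A2 x s = A1 xR s - A2 xR s"
          using e1 e2 eq[OF xFi(1)] by simp
        also have "cmod \<dots> \<le> cmod (A1 xR s) + cmod (A2 xR s)" by (rule norm_triangle_ineq4)
        also have "\<dots> \<le> l2norm (A1 xR) + l2norm (A2 xR)"
          using ell2_point_le[OF in1[OF xRi]] ell2_point_le[OF in2[OF xRi]] by (rule add_mono)
        also have "\<dots> \<le> K1 * l2norm xR + K2 * l2norm xR" using K1[OF xRi] K2[OF xRi] by simp
        also have "\<dots> \<le> K * l2norm xR"
        proof -
          have "K1 * l2norm xR \<le> \<bar>K1\<bar> * l2norm xR" by (rule mult_right_mono) (auto simp: l2norm_nonneg)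
          moreover have "K2 * l2norm xR \<le> \<bar>K2\<bar> * l2norm xR" by (rule mult_right_mono) (auto simp: l2norm_nonneg)
          ultimately show ?thesis unfolding K_def distrib_right by linarith
        qed
        also have "\<dots> \<le> K * (\<epsilon> / (K + 1))" using nR Kn by (rule mult_left_mono)
        also have "\<dots> \<le> \<epsilon>" using Kn ep by (simp add: field_simps)
        finally show ?thesis .
      qed
      note hh = this
      have "cmod (A1 x s - A2 x s) = 0"
      proof (rule ccontr)
        assume "cmod (A1 x s - A2 x s) \<noteq> 0"
        then have "cmod (A1 x s - A2 x s) > 0" by simp
        from hh[of "cmod (A1 x s - A2 x s) / 2"] this show False by simp
      qed
      then show "A1 x s = A2 x s" by simp
    qed
  qed
qed

definition Dexp :: "letter \<Rightarrow> (vertex \<Rightarrow> complex) \<Rightarrow> (vertex \<Rightarrow> complex)" where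
  "Dexp l x = (if x \<in> ell2 then (\<lambda>s. if s = root then - x root else if s = av l then x (av (inv_letter l)) else 0) else (\<lambda>t. 0))"

lemma root_ne_av[simp]: "root \<noteq> av l" "av l \<noteq> root" by (auto simp: vertex_eq)
lemma av_eq[simp]: "av l = av k \<longleftrightarrow> l = k" by (auto simp: vertex_eq)

lemma Dexp_bounded: "bounded_op_l2 (Dexp l)"
  unfolding bounded_op_l2_def
proof (intro conjI ballI allI)
  fix x assume x: "x \<in> ell2"
  show "Dexp l x \<in> ell2" by (rule fin_supp_ell(2)[of "{root, av l}"]) (auto simp: Dexp_def x)
next
  fix x y assume x: "x \<in> ell2" and y: "y \<in> ell2"
  show "Dexp l (\<lambda>t. x t + y t) = (\<lambda>t. Dexp l x t + Dexp l y t)"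
    using ell2_add[OF x y] x y by (auto simp: Dexp_def)
next
  fix x c assume x: "x \<in> ell2"
  show "Dexp l (\<lambda>t. c * x t) = (\<lambda>t. c * Dexp l x t)"
    using ell2_scale[OF x, of c] x by (auto simp: Dexp_def)
next
  show "\<exists>K. \<forall>x\<in>ell2. l2norm (Dexp l x) \<le> K * l2norm x"
  proof (intro exI[of _ 1] ballI)
    fix x assume x: "x \<in> ell2"
    have "l2norm (Dexp l x) = sqrt (\<Sum>t\<in>{root, av l}. (cmod (Dexp l x t))\<^sup>2)"
      by (rule l2norm_fin) (auto simp: Dexp_def x)
    also have "\<dots> = sqrt ((cmod (x root))\<^sup>2 + (cmod (x (av (inv_letter l))))\<^sup>2)"
      by (simp add: Dexp_def x)
    also have "\<dots> = sqrt (\<Sum>t\<in>{root, av (inv_letter l)}. (cmod (x t))\<^sup>2)" by simp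
    also have "\<dots> \<le> sqrt ((l2norm x)\<^sup>2)" by (rule real_sqrt_le_mono, rule ell2_sum_le[OF x]) simp
    also have "\<dots> = l2norm x" by (simp add: l2norm_nonneg)
    finally show "l2norm (Dexp l x) \<le> 1 * l2norm x" by simp
  qed
qed

lemma L_C: "L x s = infsum x (C s)" by (simp add: L_def C_def)

lemma Dexp_comm:
  assumes x: "x \<in> ell1"
  shows "Dexp l x = (\<lambda>s. u (lmv l) (L x) s - L (u (lmv l) x) s)"
proof
  fix s
  let ?h = "lmv (inv_letter l)"
  have inj: "inj_on ?h A" for A using bij_lmv[of "inv_letter l"] by (meson bij_betw_def inj_on_subset subset_UNIV)
  have "L (u (lmv l) x) s = infsum (x \<circ> ?h) (C s)" by (simp add: L_C u_def inv_lmv o_def)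
  also have "\<dots> = infsum x (?h ` C s)" by (rule infsum_reindex[OF inj, symmetric])
  finally have R: "L (u (lmv l) x) s = infsum x (?h ` C s)" .
  have Lf: "u (lmv l) (L x) s = infsum x (C (?h s))" by (simp add: L_C u_def inv_lmv)
  have xs: "x summable_on A" for A by (rule ell1_summable[OF x])
  have x2: "x \<in> ell2" by (rule ell1_ell2[OF x])
  consider "s = root" | "s = av l" | "s \<noteq> root" "s \<noteq> av l" by blast
  then show "Dexp l x s = u (lmv l) (L x) s - L (u (lmv l) x) s"
  proof cases
    case 1
    have hr: "?h root = av (inv_letter l)" by (simp add: vertex_eq)
    show ?thesis unfolding R Lf unfolding 1 hr image_C_root
      by (simp add: infsum_insert[OF xs] Dexp_def x2)
  next
    case 2
    have hr: "?h (av l) = root" by (simp add: vertex_eq)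
    have mem: "av (inv_letter l) \<in> C root" by (simp add: mem_C)
    have "infsum x (C root) = infsum x (insert (av (inv_letter l)) (C root - {av (inv_letter l)}))"
      using mem by (simp add: insert_absorb)
    also have "\<dots> = x (av (inv_letter l)) + infsum x (C root - {av (inv_letter l)})"
      by (rule infsum_insert[OF xs]) simp
    finally show ?thesis unfolding R Lf unfolding 2 hr image_C_av
      by (simp add: Dexp_def x2)
  next
    case 3
    show ?thesis unfolding R Lf image_C_other[OF 3] using 3 by (simp add: Dexp_def x2)
  qed
qed

lemma D_lmv: "D (lmv l) = Dexp l"
  unfolding D_def
proof (rule the_equality)
  show "bounded_op_l2 (Dexp l) \<and> (\<forall>x. x \<notin> ell2 \<longrightarrow> Dexp l x = (\<lambda>t. 0)) \<and>
    (\<forall>x\<in>ell1. Dexp l x = (\<lambda>s. u (lmv l) (L x) s - L (u (lmv l) x) s))"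
    using Dexp_bounded Dexp_comm by (auto simp: Dexp_def)
next
  fix A assume A: "bounded_op_l2 A \<and> (\<forall>x. x \<notin> ell2 \<longrightarrow> A x = (\<lambda>t. 0)) \<and>
    (\<forall>x\<in>ell1. A x = (\<lambda>s. u (lmv l) (L x) s - L (u (lmv l) x) s))"
  show "A = Dexp l"
    by (rule op_unique) (use A Dexp_bounded Dexp_comm in \<open>auto simp: Dexp_def\<close>)
qed

lemma u_e: "bij g \<Longrightarrow> u g (e v) = e (g v)"
proof -
  assume g: "bij g"
  have "inv g t = v \<longleftrightarrow> t = g v" for t using bij_inv_eq_iff[OF g, of v t] by auto
  then show ?thesis by (simp add: u_def e_def fun_eq_iff)
qed

lemma l2norm_zero[simp]: "l2norm (\<lambda>t. 0) = 0" by (simp add: l2norm_def)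

lemma pairnorm_ge: "l2norm (fst p) \<le> pairnorm p"
proof -
  have "l2norm (fst p) = sqrt ((l2norm (fst p))\<^sup>2)" by (simp add: l2norm_nonneg)
  also have "\<dots> \<le> pairnorm p" unfolding pairnorm_def by (rule real_sqrt_le_mono) simp
  finally show ?thesis .
qed

lemma cmod_le_half: "cmod z \<le> (1 + (cmod z)\<^sup>2) / 2"
proof -
  have "0 \<le> (cmod z - 1)\<^sup>2" by simp
  then show ?thesis by (simp add: power2_diff)
qed

theorem mainTheorem17:
  shows "(\<exists>S. bounded_op_into_pair S \<and> right_inverse_of_quotient S) \<and>
         \<not> (\<exists>S. bounded_op_into_pair S \<and> right_inverse_of_quotient S \<and>
               (\<forall>g\<in>Aut. \<forall>y\<in>ell2. S (u g y) = lam g (S y)))"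
proof
  define S0 where "S0 = (\<lambda>y::vertex \<Rightarrow> complex. ((\<lambda>t::vertex. 0::complex), y))"
  have z2: "(\<lambda>t::vertex. 0::complex) \<in> ell2" by (rule fin_supp_ell(2)[of "{}"]) auto
  have "bounded_op_into_pair S0"
    unfolding bounded_op_into_pair_def
  proof (intro conjI ballI allI)
    fix y assume "y \<in> ell2" then show "S0 y \<in> l2pair" using z2 by (simp add: S0_def l2pair_def)
  next
    show "\<exists>K. \<forall>y\<in>ell2. pairnorm (S0 y) \<le> K * l2norm y"
      by (rule exI[of _ 1]) (simp add: S0_def pairnorm_def l2norm_nonneg)
  qed (simp_all add: S0_def)
  moreover have "right_inverse_of_quotient S0" by (simp add: right_inverse_of_quotient_def S0_def)
  ultimately show "\<exists>S. bounded_op_into_pair S \<and> right_inverse_of_quotient S" by blast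
next
  show "\<not> (\<exists>S. bounded_op_into_pair S \<and> right_inverse_of_quotient S \<and>
               (\<forall>g\<in>Aut. \<forall>y\<in>ell2. S (u g y) = lam g (S y)))"
  proof
    assume "\<exists>S. bounded_op_into_pair S \<and> right_inverse_of_quotient S \<and>
               (\<forall>g\<in>Aut. \<forall>y\<in>ell2. S (u g y) = lam g (S y))"
    then obtain S where bS: "bounded_op_into_pair S" and rS: "right_inverse_of_quotient S"
      and eqS: "\<And>g y. g \<in> Aut \<Longrightarrow> y \<in> ell2 \<Longrightarrow> S (u g y) = lam g (S y)" by blast
    have inS: "\<And>y. y \<in> ell2 \<Longrightarrow> S y \<in> l2pair" using bS by (simp add: bounded_op_into_pair_def)
    have addS: "\<And>x y. x \<in> ell2 \<Longrightarrow> y \<in> ell2 \<Longrightarrow> fst (S (\<lambda>t. x t + y t)) = (\<lambda>t. fst (S x) t + fst (S y) t)"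
      using bS by (simp add: bounded_op_into_pair_def)
    have sclS: "\<And>x c. x \<in> ell2 \<Longrightarrow> fst (S (\<lambda>t. c * x t)) = (\<lambda>t. c * fst (S x) t)"
      using bS by (simp add: bounded_op_into_pair_def)
    obtain K where KS: "\<And>y. y \<in> ell2 \<Longrightarrow> pairnorm (S y) \<le> K * l2norm y"
      using bS unfolding bounded_op_into_pair_def by blast
    have eS: "e v \<in> ell2" for v by (rule fin_supp_ell(2)[of "{v}"]) (auto simp: e_def)
    define a where "a = (\<lambda>i::nat. av (i, True))"
    define b where "b = (\<lambda>i::nat. av (i, False))"
    have inja: "inj a" by (auto simp: a_def inj_def)
    have injb: "inj b" by (auto simp: b_def inj_def)
    define y0 where "y0 = fst (S (e root))"
    have y0: "y0 \<in> ell2" using inS[OF eS[of root]] by (auto simp: y0_def l2pair_def mem_Times_iff)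
    have key: "fst (S (e (a i))) root = y0 (b i) - 1" for i
    proof -
      let ?l = "(i, True)"
      have "u (lmv ?l) (e root) = e (a i)"
      proof -
        have "lmv ?l root = a i" by (simp add: vertex_eq a_def)
        then show ?thesis by (simp add: u_e bij_lmv)
      qed
      then have "S (e (a i)) = lam (lmv ?l) (S (e root))" using eqS[OF lmv_Aut eS] by metis
      moreover have "snd (S (e root)) = e root" using rS eS by (simp add: right_inverse_of_quotient_def)
      ultimately have "fst (S (e (a i))) = (\<lambda>t. u (lmv ?l) y0 t + Dexp ?l (e root) t)"
        by (simp add: lam_def y0_def D_lmv)
      moreover have "lmv (inv_letter ?l) root = b i" by (simp add: vertex_eq b_def inv_letter_def)
      ultimately show ?thesis using eS[of root] by (simp add: u_def inv_lmv Dexp_def e_def)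
    qed
    define X where "X = (\<lambda>n t. if t \<in> a ` {..<n} then (1::complex) else 0)"
    have Xin: "X n \<in> ell2" for n by (rule fin_supp_ell(2)[of "a ` {..<n}"]) (auto simp: X_def)
    have XB: "fst (S (X n)) root = (\<Sum>i<n. y0 (b i) - 1)" for n
    proof (induction n)
      case 0
      have "X 0 = (\<lambda>t. 0 * e root t)" by (simp add: X_def)
      then show ?case using sclS[OF eS[of root], of 0] by simp
    next
      case (Suc n)
      have "a n \<notin> a ` {..<n}" using inja by (auto simp: inj_def)
      then have "X (Suc n) = (\<lambda>t. X n t + e (a n) t)"
        by (auto simp: X_def e_def fun_eq_iff lessThan_Suc)
      then show ?case using addS[OF Xin eS] Suc key by simp
    qed
    have Xn: "l2norm (X n) = sqrt (real n)" for n
    proof -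
      have "l2norm (X n) = sqrt (\<Sum>t\<in>a ` {..<n}. (cmod (X n t))\<^sup>2)"
        by (rule l2norm_fin) (auto simp: X_def)
      also have "(\<Sum>t\<in>a ` {..<n}. (cmod (X n t))\<^sup>2) = real (card (a ` {..<n}))"
        by (simp add: X_def)
      also have "card (a ` {..<n}) = n" using inja by (simp add: card_image inj_on_subset)
      finally show ?thesis .
    qed
    define c where "c = (l2norm y0)\<^sup>2 / 2"
    have c0: "c \<ge> 0" by (simp add: c_def)
    have bound: "real n / 2 - c \<le> \<bar>K\<bar> * sqrt (real n)" for n
    proof -
      have BX: "fst (S (X n)) \<in> ell2" using inS[OF Xin] by (auto simp: l2pair_def mem_Times_iff)
      have up: "cmod (fst (S (X n)) root) \<le> \<bar>K\<bar> * sqrt (real n)"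
      proof -
        have "cmod (fst (S (X n)) root) \<le> l2norm (fst (S (X n)))" by (rule ell2_point_le[OF BX])
        also have "\<dots> \<le> pairnorm (S (X n))" by (rule pairnorm_ge)
        also have "\<dots> \<le> K * sqrt (real n)" using KS[OF Xin] Xn by simp
        also have "\<dots> \<le> \<bar>K\<bar> * sqrt (real n)" by (rule mult_right_mono) auto
        finally show ?thesis .
      qed
      have sq: "(\<Sum>i<n. (cmod (y0 (b i)))\<^sup>2) \<le> (l2norm y0)\<^sup>2"
      proof -
        have "(\<Sum>i<n. (cmod (y0 (b i)))\<^sup>2) = (\<Sum>t\<in>b ` {..<n}. (cmod (y0 t))\<^sup>2)"
          using injb by (simp add: sum.reindex inj_on_subset)
        also have "\<dots> \<le> (l2norm y0)\<^sup>2" by (rule ell2_sum_le[OF y0]) simp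
        finally show ?thesis .
      qed
      have s1: "(\<Sum>i<n. cmod (y0 (b i))) \<le> (\<Sum>i<n. (1 + (cmod (y0 (b i)))\<^sup>2) / 2)"
        by (rule sum_mono) (rule cmod_le_half)
      have s2: "(\<Sum>i<n. (1 + (cmod (y0 (b i)))\<^sup>2) / 2) = (real n + (\<Sum>i<n. (cmod (y0 (b i)))\<^sup>2)) / 2"
        by (simp add: sum_divide_distrib[symmetric] sum.distrib)
      have "(\<Sum>i<n. y0 (b i) - 1) = (\<Sum>i<n. y0 (b i)) - of_nat n"
        by (simp add: sum_subtractf)
      then have "real n - cmod (\<Sum>i<n. y0 (b i)) \<le> cmod (\<Sum>i<n. y0 (b i) - 1)"
        by (metis norm_minus_commute norm_of_nat norm_triangle_ineq2)
      moreover have "cmod (\<Sum>i<n. y0 (b i)) \<le> (\<Sum>i<n. cmod (y0 (b i)))" by (rule norm_sum)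
      moreover have up': "cmod (\<Sum>i<n. y0 (b i) - 1) \<le> \<bar>K\<bar> * sqrt (real n)" using up XB[of n] by simp
      ultimately have f1: "real n - (\<Sum>i<n. cmod (y0 (b i))) \<le> \<bar>K\<bar> * sqrt (real n)" by linarith
      have f2: "(\<Sum>i<n. cmod (y0 (b i))) \<le> (real n + (l2norm y0)\<^sup>2) / 2"
      proof -
        have "(\<Sum>i<n. cmod (y0 (b i))) \<le> (real n + (\<Sum>i<n. (cmod (y0 (b i)))\<^sup>2)) / 2"
          using s1 s2 by (rule ord_le_eq_trans)
        also have "\<dots> \<le> (real n + (l2norm y0)\<^sup>2) / 2" using sq by (simp add: divide_right_mono)
        finally show ?thesis .
      qed
      have f3: "real n / 2 - (l2norm y0)\<^sup>2 / 2 = real n - (real n + (l2norm y0)\<^sup>2) / 2" by (simp add: field_simps)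
      have "real n - (real n + (l2norm y0)\<^sup>2) / 2 \<le> real n - (\<Sum>i<n. cmod (y0 (b i)))" using f2 by (rule diff_left_mono)
      then show ?thesis using f1 f3 unfolding c_def by (metis order_trans)
    qed
    define N where "N = nat \<lceil>2 * \<bar>K\<bar> + 2 * c + 2\<rceil>"
    have N: "real N \<ge> 2 * \<bar>K\<bar> + 2 * c + 2" unfolding N_def by linarith
    have "real (N^2) / 2 - c \<le> \<bar>K\<bar> * real N" using bound[of "N^2"] by simp
    moreover have "real N * (real N / 2) \<ge> real N * (\<bar>K\<bar> + c + 1)"
      by (rule mult_left_mono) (use N in auto)
    moreover have "real N * (c + 1) \<ge> 1 * (c + 1)"
      by (rule mult_right_mono) (use N c0 in auto)
    ultimately show False by (simp add: power2_eq_square algebra_simps)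
  qed
qed

end
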